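(* For each $j\ge1$, the random variables $f_jZ_jI_j^{obs}$, $f_jI_j^{cen}$, $b_jI_j^{cen}$ and $I_j^{cen}$ are $\mathcal O_\tau$-measurable.
   Context: Fix a single subject (subject index and parameters suppressed). Event times $0=S_0<S_1<S_2<\cdots$, censoring time $0<C<\infty$, $\tau=\min\{j\ge1:C\le S_j\}$ (assumed finite a.s.). $I_j^{obs}=I\{S_j\le C\}$, $I_j^{cen}=I\{S_{j-1}<C<S_j\}$. For $j\ge1$, $f_j$ (vector-valued), $Z_j$ and $b_j$ (real) are given random variables (in the paper, $f_j=V_j^{-1}\partial\mu_j/\partial\theta$, $Z_j=(Y_j-\mu_j)/V_j$ with $Y_j=S_j-S_{j-1}$, and $b_j$ a weight). For $n\ge1$ let $\mathcal O_n=\sigma\big(f_jZ_jI_n^{cen}\ (j\le n-1),\ f_nI_n^{cen},\ b_nI_n^{cen},\ I_n^{cen}\big)$, and $\mathcal O_\tau=\{A\subseteq\Omega: A\cap\{\tau=n\}\in\mathcal O_n\text{ for all }n\ge1\}$ (a $\sigma$-field). *)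

theory Defs
  imports "HOL-Analysis.Analysis" "HOL-Library.Extended_Nat"
begin

definition Iobs :: "(nat \<Rightarrow> 'a \<Rightarrow> real) \<Rightarrow> ('a \<Rightarrow> real) \<Rightarrow> nat \<Rightarrow> 'a \<Rightarrow> real" where
  "Iobs S C j \<omega> = of_bool (S j \<omega> \<le> C \<omega>)"

definition Icen :: "(nat \<Rightarrow> 'a \<Rightarrow> real) \<Rightarrow> ('a \<Rightarrow> real) \<Rightarrow> nat \<Rightarrow> 'a \<Rightarrow> real" where
  "Icen S C j \<omega> = of_bool (S (j - 1) \<omega> < C \<omega> \<and> C \<omega> < S j \<omega>)"

definition tau :: "(nat \<Rightarrow> 'a \<Rightarrow> real) \<Rightarrow> ('a \<Rightarrow> real) \<Rightarrow> 'a \<Rightarrow> enat" where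
  "tau S C \<omega> = (if \<exists>j\<ge>1. C \<omega> \<le> S j \<omega>
                 then enat (LEAST j. 1 \<le> j \<and> C \<omega> \<le> S j \<omega>) else \<infinity>)"

definition gen_sigma :: "'a set \<Rightarrow> ('a \<Rightarrow> real) set \<Rightarrow> ('a \<Rightarrow> 'v::euclidean_space) set \<Rightarrow> 'a measure" where
  "gen_sigma \<Omega> Rs Vs = sigma \<Omega>
     ({X -` B \<inter> \<Omega> | X B. X \<in> Rs \<and> B \<in> sets (borel :: real measure)} \<union>
      {X -` B \<inter> \<Omega> | X B. X \<in> Vs \<and> B \<in> sets (borel :: 'v measure)})"

definition On :: "'a set \<Rightarrow> (nat \<Rightarrow> 'a \<Rightarrow> real) \<Rightarrow> ('a \<Rightarrow> real) \<Rightarrow> (nat \<Rightarrow> 'a \<Rightarrow> 'v::euclidean_space)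
     \<Rightarrow> (nat \<Rightarrow> 'a \<Rightarrow> real) \<Rightarrow> (nat \<Rightarrow> 'a \<Rightarrow> real) \<Rightarrow> nat \<Rightarrow> 'a measure" where
  "On \<Omega> S C f Z b n = gen_sigma \<Omega>
     {(\<lambda>\<omega>. b n \<omega> * Icen S C n \<omega>), Icen S C n}
     ({(\<lambda>\<omega>. (Z j \<omega> * Icen S C n \<omega>) *\<^sub>R f j \<omega>) | j. 1 \<le> j \<and> j \<le> n - 1} \<union>
      {(\<lambda>\<omega>. Icen S C n \<omega> *\<^sub>R f n \<omega>)})"

definition Otau :: "'a set \<Rightarrow> (nat \<Rightarrow> 'a \<Rightarrow> real) \<Rightarrow> ('a \<Rightarrow> real) \<Rightarrow> (nat \<Rightarrow> 'a \<Rightarrow> 'v::euclidean_space)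
     \<Rightarrow> (nat \<Rightarrow> 'a \<Rightarrow> real) \<Rightarrow> (nat \<Rightarrow> 'a \<Rightarrow> real) \<Rightarrow> 'a set set" where
  "Otau \<Omega> S C f Z b = {A. A \<subseteq> \<Omega> \<and>
     (\<forall>n\<ge>1. A \<inter> {\<omega> \<in> \<Omega>. tau S C \<omega> = enat n} \<in> sets (On \<Omega> S C f Z b n))}"

definition meas_wrt :: "'a set \<Rightarrow> 'a set set \<Rightarrow> ('a \<Rightarrow> 'b::topological_space) \<Rightarrow> bool" where
  "meas_wrt \<Omega> F X \<longleftrightarrow> (\<forall>B \<in> sets borel. X -` B \<inter> \<Omega> \<in> F)"

end

theory Submission
  imports Defs
begin

lemma gen_R:
  assumes "X \<in> Rs" "B \<in> sets (borel :: real measure)"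
  shows "X -` B \<inter> \<Omega> \<in> sets (gen_sigma \<Omega> Rs (Vs :: ('a \<Rightarrow> 'v::euclidean_space) set))"
  unfolding gen_sigma_def
  by (subst sets_measure_of) (auto intro!: sigma_sets.Basic simp: assms, use assms in blast)

lemma gen_V:
  assumes "X \<in> Vs" "B \<in> sets (borel :: 'v::euclidean_space measure)"
  shows "X -` B \<inter> \<Omega> \<in> sets (gen_sigma \<Omega> Rs Vs)"
  unfolding gen_sigma_def
  by (subst sets_measure_of) (auto intro!: sigma_sets.Basic simp: assms, use assms in blast)

lemma agree:
  assumes "T \<in> sets M" "Y -` B \<inter> \<Omega> \<in> sets M" "\<forall>\<omega>\<in>T. X \<omega> = Y \<omega>" "T \<subseteq> \<Omega>"
  shows "(X -` B \<inter> \<Omega>) \<inter> T \<in> sets M"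
proof -
  have "(X -` B \<inter> \<Omega>) \<inter> T = (Y -` B \<inter> \<Omega>) \<inter> T" using assms by auto
  then show ?thesis using assms by auto
qed

lemma const:
  assumes "T \<in> sets M" "\<forall>\<omega>\<in>T. X \<omega> = c" "T \<subseteq> \<Omega>"
  shows "(X -` B \<inter> \<Omega>) \<inter> T \<in> sets M"
proof (cases "c \<in> B")
  case True
  then have "(X -` B \<inter> \<Omega>) \<inter> T = T" using assms by auto
  then show ?thesis using assms by auto
next
  case False
  then have "(X -` B \<inter> \<Omega>) \<inter> T = {}" using assms by auto
  then show ?thesis by auto
qed

theorem lemma6p1:
  fixes \<Omega> :: "'a set"
    and S :: "nat \<Rightarrow> 'a \<Rightarrow> real" and C :: "'a \<Rightarrow> real"
    and f :: "nat \<Rightarrow> 'a \<Rightarrow> 'v::euclidean_space"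
    and Z b :: "nat \<Rightarrow> 'a \<Rightarrow> real"
    and j :: nat
  assumes S0: "\<And>\<omega>. \<omega> \<in> \<Omega> \<Longrightarrow> S 0 \<omega> = 0"
    and Smono: "\<And>\<omega>. \<omega> \<in> \<Omega> \<Longrightarrow> strict_mono (\<lambda>k. S k \<omega>)"
    and Cpos: "\<And>\<omega>. \<omega> \<in> \<Omega> \<Longrightarrow> 0 < C \<omega>"
    and noties: "\<And>\<omega> k. \<omega> \<in> \<Omega> \<Longrightarrow> C \<omega> \<noteq> S k \<omega>"
    and j: "1 \<le> j"
  shows "meas_wrt \<Omega> (Otau \<Omega> S C f Z b) (\<lambda>\<omega>. (Z j \<omega> * Iobs S C j \<omega>) *\<^sub>R f j \<omega>) \<and>
         meas_wrt \<Omega> (Otau \<Omega> S C f Z b) (\<lambda>\<omega>. Icen S C j \<omega> *\<^sub>R f j \<omega>) \<and>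
         meas_wrt \<Omega> (Otau \<Omega> S C f Z b) (\<lambda>\<omega>. b j \<omega> * Icen S C j \<omega>) \<and>
         meas_wrt \<Omega> (Otau \<Omega> S C f Z b) (\<lambda>\<omega>. Icen S C j \<omega>)"
proof -
  have mono_le: "S k \<omega> \<le> S m \<omega> \<longleftrightarrow> k \<le> m" if "\<omega> \<in> \<Omega>" for k m \<omega>
    using strict_mono_less_eq[OF Smono[OF that], of k m] by simp
  have mono_lt: "S k \<omega> < S m \<omega> \<longleftrightarrow> k < m" if "\<omega> \<in> \<Omega>" for k m \<omega>
    using strict_mono_less[OF Smono[OF that], of k m] by simp
  have tau_eq: "tau S C \<omega> = enat n \<longleftrightarrow> S (n-1) \<omega> < C \<omega> \<and> C \<omega> < S n \<omega>"
    if w: "\<omega> \<in> \<Omega>" and n: "1 \<le> n" for \<omega> n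
  proof
    assume t: "tau S C \<omega> = enat n"
    then have ex: "\<exists>j\<ge>1. C \<omega> \<le> S j \<omega>" unfolding tau_def by (auto split: if_splits)
    with t have L: "(LEAST j. 1 \<le> j \<and> C \<omega> \<le> S j \<omega>) = n" unfolding tau_def by auto
    from ex have "1 \<le> n \<and> C \<omega> \<le> S n \<omega>" unfolding L[symmetric] by (rule LeastI_ex)
    then have c1: "C \<omega> < S n \<omega>" using noties[OF w, of n] by auto
    have c2: "S (n-1) \<omega> < C \<omega>"
    proof (cases "n - 1 = 0")
      case True then show ?thesis using S0[OF w] Cpos[OF w] by simp
    next
      case False
      have "\<not> (1 \<le> n - 1 \<and> C \<omega> \<le> S (n-1) \<omega>)"
        using not_less_Least[of "n-1" "\<lambda>j. 1 \<le> j \<and> C \<omega> \<le> S j \<omega>"] L n by auto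
      then show ?thesis using False by auto
    qed
    show "S (n-1) \<omega> < C \<omega> \<and> C \<omega> < S n \<omega>" using c1 c2 by auto
  next
    assume a: "S (n-1) \<omega> < C \<omega> \<and> C \<omega> < S n \<omega>"
    have L: "(LEAST j. 1 \<le> j \<and> C \<omega> \<le> S j \<omega>) = n"
    proof (rule Least_equality)
      show "1 \<le> n \<and> C \<omega> \<le> S n \<omega>" using a n by auto
    next
      fix y assume y: "1 \<le> y \<and> C \<omega> \<le> S y \<omega>"
      show "n \<le> y"
      proof (rule ccontr)
        assume "\<not> n \<le> y"
        then have "S y \<omega> \<le> S (n-1) \<omega>" using mono_le[OF w] by auto
        then show False using a y by auto
      qed
    qed
    have "\<exists>j\<ge>1. C \<omega> \<le> S j \<omega>" using a n by (intro exI[of _ n]) auto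
    then show "tau S C \<omega> = enat n" unfolding tau_def L by simp
  qed
  define T where "T n = {\<omega> \<in> \<Omega>. tau S C \<omega> = enat n}" for n
  define M where "M n = On \<Omega> S C f Z b n" for n
  have Tsub: "T n \<subseteq> \<Omega>" for n unfolding T_def by auto
  have Icen_T: "Icen S C k \<omega> = (if k = n then 1 else 0)"
    if "\<omega> \<in> T n" "1 \<le> n" "1 \<le> k" for \<omega> n k
  proof -
    have w: "\<omega> \<in> \<Omega>" and a: "S (n-1) \<omega> < C \<omega> \<and> C \<omega> < S n \<omega>"
      using that tau_eq unfolding T_def by auto
    show ?thesis
    proof (cases "k = n")
      case True then show ?thesis using a unfolding Icen_def by simp
    next
      case False
      then have "k < n \<or> n < k" by auto
      then have "\<not> (S (k - 1) \<omega> < C \<omega> \<and> C \<omega> < S k \<omega>)"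
      proof
        assume "k < n" then have "S k \<omega> \<le> S (n-1) \<omega>" using mono_le[OF w] by auto
        then show ?thesis using a by auto
      next
        assume "n < k" then have "S n \<omega> \<le> S (k-1) \<omega>" using mono_le[OF w] by auto
        then show ?thesis using a by auto
      qed
      then show ?thesis using False unfolding Icen_def by simp
    qed
  qed
  have Iobs_T: "Iobs S C k \<omega> = (if k \<le> n - 1 then 1 else 0)"
    if "\<omega> \<in> T n" "1 \<le> n" for \<omega> n k
  proof -
    have w: "\<omega> \<in> \<Omega>" and a: "S (n-1) \<omega> < C \<omega> \<and> C \<omega> < S n \<omega>"
      using that tau_eq unfolding T_def by auto
    show ?thesis
    proof (cases "k \<le> n - 1")
      case True then have "S k \<omega> \<le> S (n-1) \<omega>" using mono_le[OF w] by auto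
      then show ?thesis using a True unfolding Iobs_def by simp
    next
      case False then have "S n \<omega> \<le> S k \<omega>" using mono_le[OF w] by auto
      then show ?thesis using a False unfolding Iobs_def by simp
    qed
  qed
  have Tin: "T n \<in> sets (M n)" if n: "1 \<le> n" for n
  proof -
    have "T n = Icen S C n -` {1} \<inter> \<Omega>"
      using tau_eq n unfolding T_def Icen_def by auto
    moreover have "Icen S C n -` {1} \<inter> \<Omega> \<in> sets (M n)"
      unfolding M_def On_def by (rule gen_R) auto
    ultimately show ?thesis by simp
  qed
  have OT: "meas_wrt \<Omega> (Otau \<Omega> S C f Z b) X"
    if H: "\<And>n B. 1 \<le> n \<Longrightarrow> B \<in> sets borel \<Longrightarrow> (X -` B \<inter> \<Omega>) \<inter> T n \<in> sets (M n)"
    for X :: "'a \<Rightarrow> 'b::topological_space"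
    unfolding meas_wrt_def Otau_def using H unfolding T_def M_def by auto
  show ?thesis
  proof (intro conjI)
    show "meas_wrt \<Omega> (Otau \<Omega> S C f Z b) (\<lambda>\<omega>. (Z j \<omega> * Iobs S C j \<omega>) *\<^sub>R f j \<omega>)"
    proof (rule OT)
      fix n :: nat and B :: "'v set" assume n: "1 \<le> n" and B: "B \<in> sets borel"
      show "((\<lambda>\<omega>. (Z j \<omega> * Iobs S C j \<omega>) *\<^sub>R f j \<omega>) -` B \<inter> \<Omega>) \<inter> T n \<in> sets (M n)"
      proof (cases "j \<le> n - 1")
        case True
        show ?thesis
        proof (rule agree[OF Tin[OF n] _ _ Tsub])
          show "(\<lambda>\<omega>. (Z j \<omega> * Icen S C n \<omega>) *\<^sub>R f j \<omega>) -` B \<inter> \<Omega> \<in> sets (M n)"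
            unfolding M_def On_def by (rule gen_V[OF _ B]) (use True j in auto)
          show "\<forall>\<omega>\<in>T n. (Z j \<omega> * Iobs S C j \<omega>) *\<^sub>R f j \<omega> = (Z j \<omega> * Icen S C n \<omega>) *\<^sub>R f j \<omega>"
            using Iobs_T Icen_T n True by auto
        qed
      next
        case False
        show ?thesis
          by (rule const[OF Tin[OF n] _ Tsub, of _ 0]) (use Iobs_T n False in auto)
      qed
    qed
    show "meas_wrt \<Omega> (Otau \<Omega> S C f Z b) (\<lambda>\<omega>. Icen S C j \<omega> *\<^sub>R f j \<omega>)"
    proof (rule OT)
      fix n :: nat and B :: "'v set" assume n: "1 \<le> n" and B: "B \<in> sets borel"
      show "((\<lambda>\<omega>. Icen S C j \<omega> *\<^sub>R f j \<omega>) -` B \<inter> \<Omega>) \<inter> T n \<in> sets (M n)"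
      proof (cases "j = n")
        case True
        show ?thesis
          by (rule agree[OF Tin[OF n] _ _ Tsub, of "\<lambda>\<omega>. Icen S C n \<omega> *\<^sub>R f n \<omega>"])
            (unfold M_def On_def, rule gen_V[OF _ B], auto simp: True)
      next
        case False
        show ?thesis
          by (rule const[OF Tin[OF n] _ Tsub, of _ 0]) (use Icen_T n j False in auto)
      qed
    qed
    show "meas_wrt \<Omega> (Otau \<Omega> S C f Z b) (\<lambda>\<omega>. b j \<omega> * Icen S C j \<omega>)"
    proof (rule OT)
      fix n :: nat and B :: "real set" assume n: "1 \<le> n" and B: "B \<in> sets borel"
      show "((\<lambda>\<omega>. b j \<omega> * Icen S C j \<omega>) -` B \<inter> \<Omega>) \<inter> T n \<in> sets (M n)"
      proof (cases "j = n")
        case True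
        show ?thesis
          by (rule agree[OF Tin[OF n] _ _ Tsub, of "\<lambda>\<omega>. b n \<omega> * Icen S C n \<omega>"])
            (unfold M_def On_def, rule gen_R[OF _ B], auto simp: True)
      next
        case False
        show ?thesis
          by (rule const[OF Tin[OF n] _ Tsub, of _ 0]) (use Icen_T n j False in auto)
      qed
    qed
    show "meas_wrt \<Omega> (Otau \<Omega> S C f Z b) (\<lambda>\<omega>. Icen S C j \<omega>)"
    proof (rule OT)
      fix n :: nat and B :: "real set" assume n: "1 \<le> n" and B: "B \<in> sets borel"
      show "((\<lambda>\<omega>. Icen S C j \<omega>) -` B \<inter> \<Omega>) \<inter> T n \<in> sets (M n)"
        by (rule const[OF Tin[OF n] _ Tsub, of _ "if j = n then 1 else 0"])
          (use Icen_T n j in auto)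
    qed
  qed
qed

end
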